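(* For every composition $\alpha$ and all $a,b\in\mathbb C$, $\omega(\widehat{\mathcal B}(a,b)_\alpha)=\widehat{\mathcal B}(-a,a+b)_{\alpha^r}$.
   Context: $\mathsf{NSym}$ is the algebra of noncommutative symmetric functions over $\mathbb C$ with basis $H_\alpha=H_{\alpha_1}\cdots H_{\alpha_l}$; $\Lambda_n=\sum_{\beta}(-1)^{n-\ell(\beta)}H_\beta$ (sum over compositions $\beta$ of $n$) and $\Lambda_\alpha=\Lambda_{\alpha_1}\cdots\Lambda_{\alpha_l}$. $\omega:\mathsf{NSym}\to\mathsf{NSym}$ is the involutive algebra anti-automorphism with $\omega(H_\alpha)=\Lambda_{\alpha^r}$, where $\alpha^r=(\alpha_l,\dots,\alpha_1)$. For a composition $\alpha$ of $n$, $\mathrm{set}(\alpha)=\{\alpha_1,\alpha_1+\alpha_2,\dots,\alpha_1+\dots+\alpha_{l-1}\}$, $\ell(\alpha)=l$, and $\beta\preceq\alpha$ means $\mathrm{set}(\alpha)\subseteq\mathrm{set}(\beta)$. Define $\widehat{\mathcal B}(a,b)_\alpha=\sum_{\beta\preceq\alpha}a^{n-\ell(\beta)}b^{\ell(\beta)-\ell(\alpha)}H_\beta$ (convention $0^0=1$), and $\widehat{\mathcal B}(a,b)$ of the empty composition is $1$. *)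

theory Defs
  imports Complex_Main
begin

text \<open>Elements of NSym are represented by their coefficient functions in the
 basis H_alpha: an element f corresponds to the sum over compositions alpha of
 f alpha * H_alpha.\<close>

type_synonym nsym = "nat list \<Rightarrow> complex"

definition is_composition :: "nat list \<Rightarrow> bool" where
  "is_composition \<alpha> \<longleftrightarrow> (\<forall>x\<in>set \<alpha>. 0 < x)"

definition comps :: "nat \<Rightarrow> nat list set" where
  "comps n = {\<beta>. is_composition \<beta> \<and> sum_list \<beta> = n}"

definition compset :: "nat list \<Rightarrow> nat set" where
  "compset \<alpha> = {sum_list (take i \<alpha>) | i. 0 < i \<and> i < length \<alpha>}"

definition refines :: "nat list \<Rightarrow> nat list \<Rightarrow> bool" where
  "refines \<beta> \<alpha> \<longleftrightarrow> compset \<alpha> \<subseteq> compset \<beta>"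

text \<open>Multiplication: H_u H_v = H_(u@v), extended bilinearly.\<close>
definition nmult :: "nsym \<Rightarrow> nsym \<Rightarrow> nsym" where
  "nmult f g = (\<lambda>\<gamma>. \<Sum>i\<le>length \<gamma>. f (take i \<gamma>) * g (drop i \<gamma>))"

definition none :: nsym where
  "none = (\<lambda>\<gamma>. if \<gamma> = [] then 1 else 0)"

definition Hgen :: "nat \<Rightarrow> nsym" where
  "Hgen n = (\<lambda>\<gamma>. if \<gamma> = [n] then 1 else 0)"

definition H :: "nat list \<Rightarrow> nsym" where
  "H \<alpha> = foldr (\<lambda>n acc. nmult (Hgen n) acc) \<alpha> none"

definition Lam :: "nat \<Rightarrow> nsym" where
  "Lam n = (\<lambda>\<gamma>. \<Sum>\<beta>\<in>comps n. (-1) ^ (n - length \<beta>) * H \<beta> \<gamma>)"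

definition LamC :: "nat list \<Rightarrow> nsym" where
  "LamC \<alpha> = foldr (\<lambda>n acc. nmult (Lam n) acc) \<alpha> none"

text \<open>omega: the linear map with omega(H_alpha) = Lambda_(rev alpha). Since Lambda_(rev alpha)
 is homogeneous of degree |alpha|, the coefficient of H_gamma in omega(f) only involves
 f alpha for compositions alpha of |gamma|.\<close>
definition omega :: "nsym \<Rightarrow> nsym" where
  "omega f = (\<lambda>\<gamma>. \<Sum>\<alpha>\<in>comps (sum_list \<gamma>). f \<alpha> * LamC (rev \<alpha>) \<gamma>)"

text \<open>Bhat(a,b)_alpha; Isabelle's 0^0 = 1 matches the convention.\<close>
definition Bhat :: "complex \<Rightarrow> complex \<Rightarrow> nat list \<Rightarrow> nsym" where
  "Bhat a b \<alpha> = (\<lambda>\<gamma>. \<Sum>\<beta>\<in>{\<beta>\<in>comps (sum_list \<alpha>). refines \<beta> \<alpha>}.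
      a ^ (sum_list \<alpha> - length \<beta>) * b ^ (length \<beta> - length \<alpha>) * H \<beta> \<gamma>)"

end

theory Submission
  imports Defs
begin

definition ind :: "nat list \<Rightarrow> nsym" where
  "ind u = (\<lambda>\<gamma>. if \<gamma> = u then 1 else 0)"

lemma nmult_ind: "nmult (ind u) (ind v) = ind (u @ v)"
proof
  fix \<gamma>
  have eq: "\<And>i. i \<le> length \<gamma> \<Longrightarrow> ind u (take i \<gamma>) * ind v (drop i \<gamma>) =
     (if i = length u then ind (u @ v) \<gamma> else 0)"
  proof -
    fix i assume i: "i \<le> length \<gamma>"
    have iff: "(take i \<gamma> = u \<and> drop i \<gamma> = v) \<longleftrightarrow> (\<gamma> = u @ v \<and> i = length u)"
    proof
      assume h: "take i \<gamma> = u \<and> drop i \<gamma> = v"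
      then have "\<gamma> = u @ v" by (metis append_take_drop_id)
      moreover have "i = length u" using h i by auto
      ultimately show "\<gamma> = u @ v \<and> i = length u" by simp
    next
      assume "\<gamma> = u @ v \<and> i = length u"
      then show "take i \<gamma> = u \<and> drop i \<gamma> = v" by simp
    qed
    have "ind u (take i \<gamma>) * ind v (drop i \<gamma>) = (if take i \<gamma> = u \<and> drop i \<gamma> = v then 1 else 0)"
      by (simp add: ind_def)
    also have "\<dots> = (if \<gamma> = u @ v \<and> i = length u then 1 else 0)" by (simp only: iff)
    also have "\<dots> = (if i = length u then ind (u @ v) \<gamma> else 0)" by (auto simp: ind_def)
    finally show "ind u (take i \<gamma>) * ind v (drop i \<gamma>) =
     (if i = length u then ind (u @ v) \<gamma> else 0)" .
  qed
  have "nmult (ind u) (ind v) \<gamma> = (\<Sum>i\<le>length \<gamma>. if i = length u then ind (u @ v) \<gamma> else 0)"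
    unfolding nmult_def using eq by (intro sum.cong) auto
  also have "\<dots> = ind (u @ v) \<gamma>"
    by (auto simp: ind_def)
  finally show "nmult (ind u) (ind v) \<gamma> = ind (u @ v) \<gamma>" .
qed

lemma H_ind: "H \<beta> = ind \<beta>"
proof (induction \<beta>)
  case Nil
  then show ?case by (simp add: H_def none_def ind_def)
next
  case (Cons x \<beta>)
  have "H (x # \<beta>) = nmult (Hgen x) (H \<beta>)" by (simp add: H_def)
  also have "Hgen x = ind [x]" by (simp add: Hgen_def ind_def)
  finally show ?case using Cons nmult_ind by simp
qed

lemma is_comp_Cons[simp]: "is_composition (x # w) \<longleftrightarrow> 0 < x \<and> is_composition w"
  by (simp add: is_composition_def)

lemma is_comp_Nil[simp]: "is_composition []"
  by (simp add: is_composition_def)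

lemma is_comp_append[simp]: "is_composition (u @ w) \<longleftrightarrow> is_composition u \<and> is_composition w"
  by (auto simp: is_composition_def)

lemma compset_Nil[simp]: "compset [] = {}"
  by (simp add: compset_def)

lemma compset_Cons: "compset (x # w) = (if w = [] then {} else insert x ((+) x ` compset w))"
proof (cases "w = []")
  case True
  then show ?thesis by (simp add: compset_def)
next
  case False
  have "compset (x # w) \<subseteq> insert x ((+) x ` compset w)"
  proof
    fix y assume "y \<in> compset (x # w)"
    then obtain i where i: "0 < i" "i < Suc (length w)" "y = sum_list (take i (x # w))"
      unfolding compset_def by auto
    then obtain j where j: "i = Suc j" by (cases i) auto
    show "y \<in> insert x ((+) x ` compset w)"
    proof (cases "j = 0")
      case True then show ?thesis using i j by simp
    next
      case False
      then have "sum_list (take j w) \<in> compset w" using i j unfolding compset_def by auto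
      then show ?thesis using i j by simp
    qed
  qed
  moreover have "insert x ((+) x ` compset w) \<subseteq> compset (x # w)"
  proof
    fix y assume "y \<in> insert x ((+) x ` compset w)"
    then consider "y = x" | j where "0 < j" "j < length w" "y = x + sum_list (take j w)"
      unfolding compset_def by auto
    then show "y \<in> compset (x # w)"
    proof cases
      case 1
      then have "y = sum_list (take 1 (x # w))" by simp
      then show ?thesis unfolding compset_def using False by force
    next
      case 2
      then have "y = sum_list (take (Suc j) (x # w))" by simp
      then show ?thesis unfolding compset_def using 2 by force
    qed
  qed
  ultimately show ?thesis using False by auto
qed

lemma compset_bounds: "is_composition \<beta> \<Longrightarrow> compset \<beta> \<subseteq> {0<..<sum_list \<beta>}"
proof (induction \<beta>)
  case Nil then show ?case by simp
next
  case (Cons x w)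
  show ?case
  proof (cases "w = []")
    case True then show ?thesis by (simp add: compset_Cons)
  next
    case False
    then have "0 < sum_list w" using Cons.prems
      by (cases w) auto
    then show ?thesis using Cons by (auto simp: compset_Cons False)
  qed
qed

lemma compset_le: "compset \<beta> \<subseteq> {..sum_list \<beta>}"
proof (induction \<beta>)
  case Nil then show ?case by simp
next
  case (Cons x w) then show ?case by (auto simp: compset_Cons)
qed

lemma finite_compset[simp]: "finite (compset \<beta>)"
  using compset_le finite_subset by blast

lemma card_compset: "is_composition \<beta> \<Longrightarrow> card (compset \<beta>) = length \<beta> - 1"
proof (induction \<beta>)
  case Nil then show ?case by simp
next
  case (Cons x w)
  show ?case
  proof (cases "w = []")
    case True then show ?thesis by (simp add: compset_Cons)
  next
    case False
    have "x \<notin> (+) x ` compset w" using compset_bounds[of w] Cons.prems by auto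
    moreover have "card ((+) x ` compset w) = card (compset w)" by (simp add: card_image)
    ultimately show ?thesis using Cons False by (simp add: compset_Cons)
  qed
qed

lemma compset_append: "u \<noteq> [] \<Longrightarrow> v \<noteq> [] \<Longrightarrow>
   compset (u @ v) = compset u \<union> insert (sum_list u) ((+) (sum_list u) ` compset v)"
proof (induction u)
  case Nil then show ?case by simp
next
  case (Cons x w)
  show ?case
  proof (cases "w = []")
    case True then show ?thesis using Cons by (simp add: compset_Cons)
  next
    case False
    then show ?thesis using Cons by (auto simp: compset_Cons image_image add.assoc)
  qed
qed

lemma compset_rev: "compset (rev \<beta>) = (\<lambda>y. sum_list \<beta> - y) ` compset \<beta>"
proof (induction \<beta>)
  case Nil then show ?case by simp
next
  case (Cons x w)
  show ?case
  proof (cases "w = []")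
    case True then show ?thesis by (simp add: compset_Cons)
  next
    case False
    have "compset (rev (x # w)) = compset (rev w @ [x])" by simp
    also have "\<dots> = compset (rev w) \<union> {sum_list w}"
      using False by (subst compset_append) (auto simp: sum_list_rev compset_Cons)
    also have "\<dots> = (\<lambda>y. sum_list (x # w) - y) ` compset (x # w)"
      using Cons False by (auto simp: compset_Cons image_image)
    finally show ?thesis .
  qed
qed

lemma length_le_sum: "is_composition \<beta> \<Longrightarrow> length \<beta> \<le> sum_list \<beta>"
  by (induction \<beta>) auto

lemma comp_sum0: "is_composition \<beta> \<Longrightarrow> sum_list \<beta> = 0 \<Longrightarrow> \<beta> = []"
  by (cases \<beta>) auto

lemma partial_inj: "is_composition \<gamma> \<Longrightarrow> i \<le> length \<gamma> \<Longrightarrow> j \<le> length \<gamma> \<Longrightarrow>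
  sum_list (take i \<gamma>) = sum_list (take j \<gamma>) \<Longrightarrow> i = j"
proof (induction \<gamma> arbitrary: i j)
  case Nil then show ?case by simp
next
  case (Cons x w)
  have x: "0 < x" "is_composition w" using Cons.prems(1) by simp_all
  show ?case
  proof (cases i)
    case 0
    show ?thesis
    proof (cases j)
      case (Suc j')
      have "sum_list (take j (x # w)) = x + sum_list (take j' w)" using Suc by simp
      then show ?thesis using Cons.prems(4) 0 x by simp
    qed (simp add: 0)
  next
    case (Suc i')
    show ?thesis
    proof (cases j)
      case 0
      have "sum_list (take i (x # w)) = x + sum_list (take i' w)" using Suc by simp
      then show ?thesis using Cons.prems(4) 0 x by simp
    next
      case (Suc j')
      have "sum_list (take i' w) = sum_list (take j' w)"
        using Cons.prems(4) \<open>i = Suc i'\<close> Suc by simp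
      moreover have "i' \<le> length w" "j' \<le> length w" using Cons.prems(2,3) \<open>i = Suc i'\<close> Suc by simp_all
      ultimately have "i' = j'" using Cons.IH x(2) by blast
      then show ?thesis using \<open>i = Suc i'\<close> Suc by simp
    qed
  qed
qed

lemma compset_inj: "is_composition \<beta> \<Longrightarrow> is_composition \<gamma> \<Longrightarrow> sum_list \<beta> = sum_list \<gamma> \<Longrightarrow>
   compset \<beta> = compset \<gamma> \<Longrightarrow> \<beta> = \<gamma>"
proof (induction \<beta> arbitrary: \<gamma>)
  case Nil
  then have "sum_list \<gamma> = 0" by simp
  from comp_sum0[OF Nil.prems(2) this] show ?case by (rule sym)
next
  case (Cons x w)
  have x0: "0 < x" using Cons.prems(1) by simp
  have "\<gamma> \<noteq> []"
  proof
    assume "\<gamma> = []"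
    then show False using Cons.prems(3) x0 by simp
  qed
  then obtain y v where g: "\<gamma> = y # v" by (cases \<gamma>) auto
  have x: "0 < x" "is_composition w" and y: "0 < y" "is_composition v"
    using Cons.prems g by auto
  show ?case
  proof (cases "w = []")
    case True
    then have "compset (x # w) = {}" by (simp add: compset_Cons)
    then have "compset \<gamma> = {}" using Cons.prems(4) by simp
    then have "v = []" using g by (cases "v = []") (simp_all add: compset_Cons)
    then show ?thesis using True g Cons.prems by simp
  next
    case False
    then have "compset (x # w) \<noteq> {}" by (simp add: compset_Cons)
    then have "compset \<gamma> \<noteq> {}" using Cons.prems(4) by simp
    then have v: "v \<noteq> []" using g by (auto simp: compset_Cons)
    have cw: "compset w \<subseteq> {0<..<sum_list w}" "compset v \<subseteq> {0<..<sum_list v}"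
      using compset_bounds x y by auto
    have eq: "insert x ((+) x ` compset w) = insert y ((+) y ` compset v)"
      using Cons.prems g False v by (simp add: compset_Cons)
    have "x \<in> insert y ((+) y ` compset v)" using eq by blast
    then have yx: "y \<le> x" by auto
    have "y \<in> insert x ((+) x ` compset w)" using eq by blast
    then have "x \<le> y" by auto
    then have xy: "x = y" using yx by simp
    have n1: "x \<notin> (+) x ` compset w" and n2: "x \<notin> (+) x ` compset v" using cw by auto
    have e2: "insert x ((+) x ` compset w) = insert x ((+) x ` compset v)" using eq xy by simp
    have "(+) x ` compset w = (+) x ` compset v"
    proof -
      have "(+) x ` compset w = insert x ((+) x ` compset w) - {x}" using n1 by simp
      also have "\<dots> = insert x ((+) x ` compset v) - {x}" using e2 by simp
      also have "\<dots> = (+) x ` compset v" using n2 by simp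
      finally show ?thesis .
    qed
    then have "compset w = compset v" by (simp add: inj_image_eq_iff)
    moreover have "sum_list w = sum_list v" using Cons.prems(3) g xy by simp
    ultimately have "w = v" using Cons.IH[of v] x y by blast
    then show ?thesis using g xy by simp
  qed
qed

lemma compset_surj: "0 < n \<Longrightarrow> S \<subseteq> {0<..<n} \<Longrightarrow>
   \<exists>\<beta>. is_composition \<beta> \<and> sum_list \<beta> = n \<and> compset \<beta> = S"
proof (induction n arbitrary: S rule: less_induct)
  case (less n)
  show ?case
  proof (cases "S = {}")
    case True
    then show ?thesis using less.prems by (intro exI[of _ "[n]"]) (simp add: compset_Cons)
  next
    case False
    have fin: "finite S" using less.prems finite_subset by blast
    define x where "x = Min S"
    have xS: "x \<in> S" using fin False x_def by simp
    have xmin: "\<And>y. y \<in> S \<Longrightarrow> x \<le> y" using fin x_def by simp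
    have x0: "0 < x" "x < n" using xS less.prems by auto
    define S' where "S' = (\<lambda>y. y - x) ` (S - {x})"
    have "S' \<subseteq> {0<..<n - x}"
    proof
      fix z assume "z \<in> S'"
      then obtain y where "y \<in> S" "y \<noteq> x" "z = y - x" unfolding S'_def by auto
      moreover have "x \<le> y" using xmin \<open>y \<in> S\<close> by simp
      moreover have "y < n" using \<open>y \<in> S\<close> less.prems by auto
      ultimately show "z \<in> {0<..<n - x}" by auto
    qed
    moreover have "n - x < n" "0 < n - x" using x0 by simp_all
    ultimately obtain \<beta>' where b: "is_composition \<beta>'" "sum_list \<beta>' = n - x" "compset \<beta>' = S'"
      using less.IH[of "n - x" S'] by blast
    have bne: "\<beta>' \<noteq> []" using b(2) x0(2) by (cases \<beta>') auto
    have "insert x ((+) x ` S') = S"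
    proof -
      have "(+) x ` S' = S - {x}"
      proof
        show "(+) x ` S' \<subseteq> S - {x}"
        proof
          fix z assume "z \<in> (+) x ` S'"
          then obtain y where y: "y \<in> S" "y \<noteq> x" "z = x + (y - x)" unfolding S'_def by auto
          then have "x \<le> y" using xmin by simp
          then show "z \<in> S - {x}" using y by simp
        qed
        show "S - {x} \<subseteq> (+) x ` S'"
        proof
          fix y assume "y \<in> S - {x}"
          moreover then have "y = x + (y - x)" using xmin by simp
          ultimately show "y \<in> (+) x ` S'" unfolding S'_def by (intro image_eqI) auto
        qed
      qed
      then show ?thesis using xS by auto
    qed
    then have "compset (x # \<beta>') = S" using b bne by (simp add: compset_Cons)
    moreover have "is_composition (x # \<beta>')" "sum_list (x # \<beta>') = n" using b x0 by auto
    ultimately show ?thesis by blast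
  qed
qed

lemma compset_sub: "\<beta> \<in> comps n \<Longrightarrow> compset \<beta> \<subseteq> {0<..<n}"
  using compset_bounds unfolding comps_def by auto

lemma inj_compset: "inj_on compset (comps n)"
  by (rule inj_onI) (auto simp: comps_def intro: compset_inj)

lemma finite_comps[simp]: "finite (comps n)"
proof -
  have "compset ` comps n \<subseteq> Pow {0<..<n}" using compset_sub by auto
  then have "finite (compset ` comps n)" by (rule finite_subset) simp
  then show ?thesis using inj_compset finite_imageD by blast
qed

lemma Lam_eq: "Lam n \<gamma> = (if \<gamma> \<in> comps n then (-1) ^ (n - length \<gamma>) else 0)"
proof -
  have "Lam n \<gamma> = (\<Sum>\<beta>\<in>comps n. if \<gamma> = \<beta> then (-1) ^ (n - length \<beta>) else 0)"
    unfolding Lam_def H_ind ind_def by (intro sum.cong) auto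
  also have "\<dots> = (if \<gamma> \<in> comps n then (-1) ^ (n - length \<gamma>) else 0)"
    by (subst sum.delta') auto
  finally show ?thesis .
qed

lemma Bhat_eq: "Bhat x y \<alpha> \<gamma> = (if \<gamma> \<in> comps (sum_list \<alpha>) \<and> refines \<gamma> \<alpha>
   then x ^ (sum_list \<alpha> - length \<gamma>) * y ^ (length \<gamma> - length \<alpha>) else 0)"
proof -
  have "Bhat x y \<alpha> \<gamma> = (\<Sum>\<beta>\<in>{\<beta>\<in>comps (sum_list \<alpha>). refines \<beta> \<alpha>}.
      if \<gamma> = \<beta> then x ^ (sum_list \<alpha> - length \<beta>) * y ^ (length \<beta> - length \<alpha>) else 0)"
    unfolding Bhat_def H_ind ind_def by (intro sum.cong) auto
  also have "\<dots> = (if \<gamma> \<in> comps (sum_list \<alpha>) \<and> refines \<gamma> \<alpha>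
   then x ^ (sum_list \<alpha> - length \<gamma>) * y ^ (length \<gamma> - length \<alpha>) else 0)"
    by (subst sum.delta') auto
  finally show ?thesis .
qed

lemma LamC_Cons: "LamC (x # w) \<gamma> = (\<Sum>i\<le>length \<gamma>. Lam x (take i \<gamma>) * LamC w (drop i \<gamma>))"
  by (simp add: LamC_def nmult_def)

lemma LamC_eq: "is_composition \<alpha> \<Longrightarrow> LamC \<alpha> \<gamma> =
  (if is_composition \<gamma> \<and> sum_list \<gamma> = sum_list \<alpha> \<and> compset \<alpha> \<subseteq> compset \<gamma>
   then (-1) ^ (sum_list \<alpha> - length \<gamma>) else 0)"
proof (induction \<alpha> arbitrary: \<gamma>)
  case Nil
  have "LamC [] \<gamma> = (if \<gamma> = [] then 1 else 0)" by (simp add: LamC_def none_def)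
  moreover have "(\<gamma> = []) \<longleftrightarrow> (is_composition \<gamma> \<and> sum_list \<gamma> = 0)"
    using comp_sum0[of \<gamma>] by auto
  ultimately show ?case by simp
next
  case (Cons x w)
  have x: "0 < x" "is_composition w" using Cons.prems by simp_all
  have IH: "\<And>\<gamma>. LamC w \<gamma> = (if is_composition \<gamma> \<and> sum_list \<gamma> = sum_list w \<and> compset w \<subseteq> compset \<gamma>
   then (-1) ^ (sum_list w - length \<gamma>) else 0)" using Cons.IH x(2) by blast
  define R where "R = (if is_composition \<gamma> \<and> sum_list \<gamma> = sum_list (x # w) \<and> compset (x # w) \<subseteq> compset \<gamma>
   then (-1) ^ (sum_list (x # w) - length \<gamma>) else (0::complex))"
  show ?case
  proof (cases "is_composition \<gamma>")
    case False
    have "\<And>i. Lam x (take i \<gamma>) * LamC w (drop i \<gamma>) = 0"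
    proof -
      fix i
      show "Lam x (take i \<gamma>) * LamC w (drop i \<gamma>) = 0"
      proof (rule ccontr)
        assume "Lam x (take i \<gamma>) * LamC w (drop i \<gamma>) \<noteq> 0"
        then have "Lam x (take i \<gamma>) \<noteq> 0" "LamC w (drop i \<gamma>) \<noteq> 0" by auto
        then have "is_composition (take i \<gamma>)" "is_composition (drop i \<gamma>)"
          by (auto simp: Lam_eq IH comps_def split: if_splits)
        then have "is_composition \<gamma>" by (metis append_take_drop_id is_comp_append)
        then show False using False by simp
      qed
    qed
    then have "LamC (x # w) \<gamma> = 0" unfolding LamC_Cons by (intro sum.neutral) blast
    then show ?thesis using False by simp
  next
    case True
    note gc = True
    show ?thesis
    proof (cases "\<exists>i0 \<le> length \<gamma>. sum_list (take i0 \<gamma>) = x")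
      case True
      then obtain i0 where i0: "i0 \<le> length \<gamma>" "sum_list (take i0 \<gamma>) = x" by blast
      define u where "u = take i0 \<gamma>"
      define v where "v = drop i0 \<gamma>"
      have guv: "\<gamma> = u @ v" unfolding u_def v_def by simp
      have uc: "is_composition u" "is_composition v" using gc guv by simp_all
      have su: "sum_list u = x" using i0 u_def by simp
      have lu: "length u = i0" using i0 u_def by simp
      have lux: "length u \<le> x" using length_le_sum[OF uc(1)] su by simp
      have "LamC (x # w) \<gamma> = (\<Sum>i\<le>length \<gamma>. if i = i0 then Lam x u * LamC w v else 0)"
        unfolding LamC_Cons
      proof (intro sum.cong refl)
        fix i assume "i \<in> {..length \<gamma>}"
        then have il: "i \<le> length \<gamma>" by simp
        show "Lam x (take i \<gamma>) * LamC w (drop i \<gamma>) = (if i = i0 then Lam x u * LamC w v else 0)"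
        proof (cases "i = i0")
          case True then show ?thesis by (simp add: u_def v_def)
        next
          case False
          then have "sum_list (take i \<gamma>) \<noteq> x" using partial_inj[OF gc il i0(1)] i0(2) by auto
          then have "Lam x (take i \<gamma>) = 0" by (simp add: Lam_eq comps_def)
          then show ?thesis using False by simp
        qed
      qed
      also have "\<dots> = Lam x u * LamC w v" using i0(1) by simp
      also have "\<dots> = (-1) ^ (x - length u) * LamC w v"
        using uc su by (simp add: Lam_eq comps_def)
      also have "\<dots> = R"
      proof (cases "sum_list v = sum_list w")
        case False
        have "sum_list \<gamma> = x + sum_list v" using guv su by simp
        then have "sum_list \<gamma> \<noteq> sum_list (x # w)" using False by simp
        then show ?thesis using False by (simp add: IH R_def)
      next
        case True
        note sv = True
        have sg: "sum_list \<gamma> = sum_list (x # w)" using guv su True by simp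
        have lv: "length v \<le> sum_list w" using length_le_sum[OF uc(2)] True by simp
        have lg: "length \<gamma> = length u + length v" using guv by simp
        have pw: "(-1::complex) ^ (x - length u) * (-1) ^ (sum_list w - length v) =
                  (-1) ^ (sum_list (x # w) - length \<gamma>)"
        proof -
          have "x - length u + (sum_list w - length v) = sum_list (x # w) - length \<gamma>"
            using lux lv lg by simp
          then show ?thesis by (metis power_add)
        qed
        have C: "compset w \<subseteq> compset v \<longleftrightarrow> compset (x # w) \<subseteq> compset \<gamma>"
        proof (cases "w = []")
          case True then show ?thesis by (simp add: compset_Cons)
        next
          case False
          have "0 < sum_list w" using False x(2) comp_sum0 by blast
          then have vne: "v \<noteq> []" using sv by (metis less_irrefl sum_list.Nil)
          have une: "u \<noteq> []" using su x(1) by auto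
          have cg: "compset \<gamma> = compset u \<union> insert x ((+) x ` compset v)"
            using compset_append[OF une vne] guv su by simp
          have cu: "compset u \<subseteq> {0<..<x}" using compset_bounds[OF uc(1)] su by simp
          have cwb: "compset w \<subseteq> {0<..<sum_list w}" using compset_bounds[OF x(2)] .
          have cx: "compset (x # w) = insert x ((+) x ` compset w)" using False by (simp add: compset_Cons)
          show ?thesis
          proof
            assume "compset w \<subseteq> compset v"
            then show "compset (x # w) \<subseteq> compset \<gamma>" using cx cg by auto
          next
            assume h: "compset (x # w) \<subseteq> compset \<gamma>"
            show "compset w \<subseteq> compset v"
            proof
              fix z assume z: "z \<in> compset w"
              then have "x + z \<in> compset \<gamma>" using h cx by auto
              moreover have "x + z \<notin> compset u" using cu by auto
              moreover have "x + z \<noteq> x" using z cwb by auto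
              ultimately have "x + z \<in> (+) x ` compset v" using cg by auto
              then show "z \<in> compset v" by auto
            qed
          qed
        qed
        show ?thesis
          using pw C sg uc(2) sv gc by (simp add: IH R_def)
      qed
      finally show ?thesis unfolding R_def .
    next
      case False
      then have "\<And>i. i \<le> length \<gamma> \<Longrightarrow> Lam x (take i \<gamma>) = 0"
        by (auto simp: Lam_eq comps_def)
      then have lhs: "LamC (x # w) \<gamma> = 0" by (simp add: LamC_Cons)
      have "\<not> (sum_list \<gamma> = sum_list (x # w) \<and> compset (x # w) \<subseteq> compset \<gamma>)"
      proof
        assume h: "sum_list \<gamma> = sum_list (x # w) \<and> compset (x # w) \<subseteq> compset \<gamma>"
        show False
        proof (cases "w = []")
          case True
          then have "sum_list (take (length \<gamma>) \<gamma>) = x" using h by simp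
          then show False using False by blast
        next
          case False
          then have "x \<in> compset (x # w)" by (simp add: compset_Cons)
          then have "x \<in> compset \<gamma>" using h by blast
          then obtain i where "i < length \<gamma>" "sum_list (take i \<gamma>) = x"
            unfolding compset_def by auto
          then show False using \<open>\<not> (\<exists>i0\<le>length \<gamma>. sum_list (take i0 \<gamma>) = x)\<close> by auto
        qed
      qed
      then show ?thesis using lhs by auto
    qed
  qed
qed

lemma pow_subsets_binom:
  fixes a b :: complex
  assumes "finite X"
  shows "(\<Sum>T\<in>Pow X. a ^ (card X - card T) * b ^ card T) = (a + b) ^ card X"
  using assms
proof (induction X rule: finite_induct)
  case empty then show ?case by simp
next
  case (insert x F)
  have disj: "Pow F \<inter> insert x ` Pow F = {}" using insert.hyps(2) by auto
  have inj: "inj_on (insert x) (Pow F)"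
    by (rule inj_onI) (use insert.hyps(2) in \<open>auto simp: insert_ident\<close>)
  have finP: "finite (Pow F)" "finite (insert x ` Pow F)" using insert.hyps(1) by simp_all
  have cF: "\<And>T. T \<in> Pow F \<Longrightarrow> card T \<le> card F" using insert.hyps(1) card_mono by blast
  have cI: "\<And>T. T \<in> Pow F \<Longrightarrow> card (insert x T) = Suc (card T)"
    using insert.hyps finite_subset by (metis PowD card_insert_disjoint subsetD)
  have "(\<Sum>T\<in>Pow (insert x F). a ^ (card (insert x F) - card T) * b ^ card T)
     = (\<Sum>T\<in>Pow F. a ^ (card (insert x F) - card T) * b ^ card T)
     + (\<Sum>T\<in>insert x ` Pow F. a ^ (card (insert x F) - card T) * b ^ card T)"
    unfolding Pow_insert by (rule sum.union_disjoint[OF finP disj])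
  also have "(\<Sum>T\<in>Pow F. a ^ (card (insert x F) - card T) * b ^ card T)
     = a * (\<Sum>T\<in>Pow F. a ^ (card F - card T) * b ^ card T)"
    unfolding sum_distrib_left
  proof (intro sum.cong refl)
    fix T assume T: "T \<in> Pow F"
    have "card (insert x F) - card T = Suc (card F - card T)"
      using insert.hyps cF[OF T] by simp
    then show "a ^ (card (insert x F) - card T) * b ^ card T = a * (a ^ (card F - card T) * b ^ card T)"
      by simp
  qed
  also have "(\<Sum>T\<in>insert x ` Pow F. a ^ (card (insert x F) - card T) * b ^ card T)
     = (\<Sum>T\<in>Pow F. a ^ (card (insert x F) - card (insert x T)) * b ^ card (insert x T))"
    by (rule sum.reindex[OF inj, unfolded comp_def])
  also have "\<dots> = b * (\<Sum>T\<in>Pow F. a ^ (card F - card T) * b ^ card T)"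
    unfolding sum_distrib_left
  proof (intro sum.cong refl)
    fix T assume T: "T \<in> Pow F"
    show "a ^ (card (insert x F) - card (insert x T)) * b ^ card (insert x T) = b * (a ^ (card F - card T) * b ^ card T)"
      using insert.hyps cI[OF T] by simp
  qed
  finally show ?case using insert.IH insert.hyps by (simp add: algebra_simps)
qed

lemma comps0: "comps 0 = {[]}"
  unfolding comps_def using comp_sum0 by auto

lemma core:
  fixes a b :: complex
  assumes \<alpha>: "\<alpha> \<in> comps n" and \<delta>: "\<delta> \<in> comps n" and ad: "compset \<alpha> \<subseteq> compset \<delta>"
  shows "(\<Sum>\<beta>\<in>{\<beta>\<in>comps n. compset \<alpha> \<subseteq> compset \<beta> \<and> compset \<beta> \<subseteq> compset \<delta>}.
           a ^ (n - length \<beta>) * b ^ (length \<beta> - length \<alpha>))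
       = a ^ (n - length \<delta>) * (a + b) ^ (length \<delta> - length \<alpha>)"
proof (cases "n = 0")
  case True
  then have c0: "comps n = {[]}" using comps0 by simp
  then have a0: "\<alpha> = []" "\<delta> = []" using \<alpha> \<delta> by simp_all
  have "{\<beta>\<in>comps n. compset \<alpha> \<subseteq> compset \<beta> \<and> compset \<beta> \<subseteq> compset \<delta>} = {[]}"
    unfolding c0 a0 by auto
  then show ?thesis using True a0 by simp
next
  case False
  define A where "A = compset \<alpha>"
  define D where "D = compset \<delta>"
  define B where "B = {\<beta>\<in>comps n. compset \<alpha> \<subseteq> compset \<beta> \<and> compset \<beta> \<subseteq> compset \<delta>}"
  have lenc: "\<And>\<beta>. \<beta> \<in> comps n \<Longrightarrow> length \<beta> = card (compset \<beta>) + 1"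
  proof -
    fix \<beta> assume b: "\<beta> \<in> comps n"
    have bs: "sum_list \<beta> = n" "is_composition \<beta>" using b by (simp_all add: comps_def)
    have "\<beta> \<noteq> []"
    proof
      assume "\<beta> = []"
      then show False using bs(1) False by simp
    qed
    then have "length \<beta> \<ge> 1" by (cases \<beta>) simp_all
    then show "length \<beta> = card (compset \<beta>) + 1" using card_compset[OF bs(2)] by simp
  qed
  define g where "g = (\<lambda>S::nat set. a ^ (n - (card S + 1)) * b ^ (card S + 1 - (card A + 1)))"
  have "(\<Sum>\<beta>\<in>B. a ^ (n - length \<beta>) * b ^ (length \<beta> - length \<alpha>)) = (\<Sum>\<beta>\<in>B. g (compset \<beta>))"
    unfolding g_def A_def B_def using lenc \<alpha> by (intro sum.cong refl) auto
  also have "\<dots> = (\<Sum>S\<in>compset ` B. g S)"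
    by (rule sum.reindex[symmetric, unfolded comp_def]) (rule inj_on_subset[OF inj_compset], auto simp: B_def)
  also have "compset ` B = {S. A \<subseteq> S \<and> S \<subseteq> D}"
  proof
    show "compset ` B \<subseteq> {S. A \<subseteq> S \<and> S \<subseteq> D}" unfolding B_def A_def D_def by auto
    show "{S. A \<subseteq> S \<and> S \<subseteq> D} \<subseteq> compset ` B"
    proof
      fix S assume S: "S \<in> {S. A \<subseteq> S \<and> S \<subseteq> D}"
      then have "S \<subseteq> {0<..<n}" using compset_sub[OF \<delta>] D_def by auto
      then obtain \<beta> where "is_composition \<beta>" "sum_list \<beta> = n" "compset \<beta> = S"
        using compset_surj False by blast
      then show "S \<in> compset ` B" using S unfolding B_def A_def D_def comps_def by auto
    qed
  qed
  also have "{S. A \<subseteq> S \<and> S \<subseteq> D} = (\<lambda>T. A \<union> T) ` Pow (D - A)"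
  proof
    show "{S. A \<subseteq> S \<and> S \<subseteq> D} \<subseteq> (\<lambda>T. A \<union> T) ` Pow (D - A)"
    proof
      fix S assume S: "S \<in> {S. A \<subseteq> S \<and> S \<subseteq> D}"
      then have "S = A \<union> (S - A)" "S - A \<in> Pow (D - A)" by auto
      then show "S \<in> (\<lambda>T. A \<union> T) ` Pow (D - A)" by (rule image_eqI)
    qed
    show "(\<lambda>T. A \<union> T) ` Pow (D - A) \<subseteq> {S. A \<subseteq> S \<and> S \<subseteq> D}"
      using ad unfolding A_def D_def by blast
  qed
  also have "(\<Sum>S\<in>(\<lambda>T. A \<union> T) ` Pow (D - A). g S) = (\<Sum>T\<in>Pow (D - A). g (A \<union> T))"
  proof (rule sum.reindex[unfolded comp_def])
    show "inj_on ((\<union>) A) (Pow (D - A))"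
    proof (rule inj_onI)
      fix T T' assume "T \<in> Pow (D - A)" "T' \<in> Pow (D - A)" "A \<union> T = A \<union> T'"
      then have "T = (A \<union> T) - A" "T' = (A \<union> T') - A" by blast+
      then show "T = T'" using \<open>A \<union> T = A \<union> T'\<close> by simp
    qed
  qed
  also have "\<dots> = (\<Sum>T\<in>Pow (D - A). a ^ (n - 1 - card D) * (a ^ (card (D - A) - card T) * b ^ card T))"
  proof (intro sum.cong refl)
    fix T assume T: "T \<in> Pow (D - A)"
    have fD: "finite D" unfolding D_def by simp
    have cT: "card T \<le> card (D - A)" using T fD by (simp add: card_mono)
    have cDA: "card (D - A) = card D - card A" using ad fD unfolding A_def D_def by (simp add: card_Diff_subset)
    have cAD: "card A \<le> card D" using ad fD unfolding A_def D_def by (simp add: card_mono)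
    have cD: "card D \<le> n - 1"
    proof -
      have "card D \<le> card {0<..<n}" using compset_sub[OF \<delta>] unfolding D_def by (intro card_mono) auto
      then show ?thesis by simp
    qed
    have cU: "card (A \<union> T) = card A + card T"
      using T fD by (subst card_Un_disjoint) (auto simp: A_def D_def intro: finite_subset)
    have e1: "n - (card (A \<union> T) + 1) = (n - 1 - card D) + (card (D - A) - card T)"
      using cU cT cDA cAD cD False by simp
    have e2: "card (A \<union> T) + 1 - (card A + 1) = card T" using cU by simp
    show "g (A \<union> T) = a ^ (n - 1 - card D) * (a ^ (card (D - A) - card T) * b ^ card T)"
      unfolding g_def e1 e2 by (simp add: power_add)
  qed
  also have "\<dots> = a ^ (n - 1 - card D) * (a + b) ^ card (D - A)"
    by (simp add: sum_distrib_left[symmetric] pow_subsets_binom D_def)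
  also have "\<dots> = a ^ (n - length \<delta>) * (a + b) ^ (length \<delta> - length \<alpha>)"
  proof -
    have fD: "finite D" unfolding D_def by simp
    have "card (D - A) = card D - card A" using ad fD unfolding A_def D_def by (simp add: card_Diff_subset)
    then show ?thesis using lenc[OF \<alpha>] lenc[OF \<delta>] A_def D_def by simp
  qed
  finally show ?thesis unfolding B_def .
qed

lemma rev_iff:
  assumes "sum_list \<beta> = sum_list \<gamma>"
  shows "compset (rev \<beta>) \<subseteq> compset \<gamma> \<longleftrightarrow> compset \<beta> \<subseteq> compset (rev \<gamma>)"
proof -
  define n where "n = sum_list \<gamma>"
  have rb: "compset (rev \<beta>) = (\<lambda>y. n - y) ` compset \<beta>" using compset_rev assms n_def by simp
  have rg: "compset (rev \<gamma>) = (\<lambda>y. n - y) ` compset \<gamma>" using compset_rev n_def by simp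
  have lb: "\<And>y. y \<in> compset \<beta> \<Longrightarrow> y \<le> n" using compset_le[of \<beta>] assms n_def by auto
  have lg: "\<And>y. y \<in> compset \<gamma> \<Longrightarrow> y \<le> n" using compset_le[of \<gamma>] n_def by auto
  show ?thesis
  proof
    assume h: "compset (rev \<beta>) \<subseteq> compset \<gamma>"
    show "compset \<beta> \<subseteq> compset (rev \<gamma>)"
    proof
      fix y assume y: "y \<in> compset \<beta>"
      then have "n - y \<in> compset \<gamma>" using h rb by auto
      moreover have "y = n - (n - y)" using lb[OF y] by simp
      ultimately show "y \<in> compset (rev \<gamma>)" unfolding rg by (rule rev_image_eqI)
    qed
  next
    assume h: "compset \<beta> \<subseteq> compset (rev \<gamma>)"
    show "compset (rev \<beta>) \<subseteq> compset \<gamma>"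
    proof
      fix z assume "z \<in> compset (rev \<beta>)"
      then obtain y where y: "y \<in> compset \<beta>" "z = n - y" using rb by auto
      then obtain w where w: "w \<in> compset \<gamma>" "y = n - w" using h rg by auto
      have "z = w" using y w lg[OF w(1)] by simp
      then show "z \<in> compset \<gamma>" using w by simp
    qed
  qed
qed

theorem proposition4p12:
  fixes a b :: complex and \<alpha> :: "nat list"
  assumes "is_composition \<alpha>"
  shows "omega (Bhat a b \<alpha>) = Bhat (-a) (a + b) (rev \<alpha>)"
proof
  fix \<gamma>
  define n where "n = sum_list \<alpha>"
  have ac: "\<alpha> \<in> comps n" using assms n_def by (simp add: comps_def)
  have rhs: "Bhat (-a) (a + b) (rev \<alpha>) \<gamma> = (if \<gamma> \<in> comps n \<and> compset (rev \<alpha>) \<subseteq> compset \<gamma>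
      then (-a) ^ (n - length \<gamma>) * (a + b) ^ (length \<gamma> - length \<alpha>) else 0)"
    by (simp add: Bhat_eq refines_def n_def)
  have lhs: "omega (Bhat a b \<alpha>) \<gamma> = (\<Sum>\<beta>\<in>comps (sum_list \<gamma>). Bhat a b \<alpha> \<beta> * LamC (rev \<beta>) \<gamma>)"
    by (simp add: omega_def)
  show "omega (Bhat a b \<alpha>) \<gamma> = Bhat (-a) (a + b) (rev \<alpha>) \<gamma>"
  proof (cases "sum_list \<gamma> = n")
    case False
    have "\<And>\<beta>. \<beta> \<in> comps (sum_list \<gamma>) \<Longrightarrow> Bhat a b \<alpha> \<beta> = 0"
      using False by (simp add: Bhat_eq comps_def n_def)
    then have "omega (Bhat a b \<alpha>) \<gamma> = 0" unfolding lhs by simp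
    moreover have "\<gamma> \<notin> comps n" using False by (simp add: comps_def)
    ultimately show ?thesis using rhs by simp
  next
    case True
    note sg = True
    show ?thesis
    proof (cases "is_composition \<gamma>")
      case False
      have "\<And>\<beta>. \<beta> \<in> comps (sum_list \<gamma>) \<Longrightarrow> LamC (rev \<beta>) \<gamma> = 0"
        using False by (subst LamC_eq) (auto simp: comps_def is_composition_def)
      then have "omega (Bhat a b \<alpha>) \<gamma> = 0" unfolding lhs by simp
      moreover have "\<gamma> \<notin> comps n" using False by (simp add: comps_def)
      ultimately show ?thesis using rhs by simp
    next
      case True
      note gc = True
      define \<delta> where "\<delta> = rev \<gamma>"
      have dc: "\<delta> \<in> comps n" using gc sg unfolding \<delta>_def comps_def is_composition_def by simp
      have gcn: "\<gamma> \<in> comps n" using gc sg by (simp add: comps_def)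
      have trm: "\<And>\<beta>. \<beta> \<in> comps n \<Longrightarrow> Bhat a b \<alpha> \<beta> * LamC (rev \<beta>) \<gamma> =
          (-1) ^ (n - length \<gamma>) * (if compset \<alpha> \<subseteq> compset \<beta> \<and> compset \<beta> \<subseteq> compset \<delta>
             then a ^ (n - length \<beta>) * b ^ (length \<beta> - length \<alpha>) else 0)"
      proof -
        fix \<beta> assume b: "\<beta> \<in> comps n"
        have brc: "is_composition (rev \<beta>)" using b by (simp add: comps_def is_composition_def)
        have sb: "sum_list \<beta> = sum_list \<gamma>" using b sg by (simp add: comps_def)
        have L: "LamC (rev \<beta>) \<gamma> = (if compset \<beta> \<subseteq> compset \<delta> then (-1) ^ (n - length \<gamma>) else 0)"
          using LamC_eq[OF brc, of \<gamma>] rev_iff[OF sb] gc sg sb \<delta>_def by simp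
        have B: "Bhat a b \<alpha> \<beta> = (if compset \<alpha> \<subseteq> compset \<beta>
             then a ^ (n - length \<beta>) * b ^ (length \<beta> - length \<alpha>) else 0)"
          using b by (simp add: Bhat_eq refines_def n_def)
        show "Bhat a b \<alpha> \<beta> * LamC (rev \<beta>) \<gamma> =
          (-1) ^ (n - length \<gamma>) * (if compset \<alpha> \<subseteq> compset \<beta> \<and> compset \<beta> \<subseteq> compset \<delta>
             then a ^ (n - length \<beta>) * b ^ (length \<beta> - length \<alpha>) else 0)"
          unfolding L B by simp
      qed
      have "omega (Bhat a b \<alpha>) \<gamma> = (-1) ^ (n - length \<gamma>) *
          (\<Sum>\<beta>\<in>comps n. if compset \<alpha> \<subseteq> compset \<beta> \<and> compset \<beta> \<subseteq> compset \<delta>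
             then a ^ (n - length \<beta>) * b ^ (length \<beta> - length \<alpha>) else 0)"
        unfolding lhs sg sum_distrib_left using trm by (intro sum.cong) auto
      also have "\<dots> = (-1) ^ (n - length \<gamma>) *
          (\<Sum>\<beta>\<in>{\<beta>\<in>comps n. compset \<alpha> \<subseteq> compset \<beta> \<and> compset \<beta> \<subseteq> compset \<delta>}.
             a ^ (n - length \<beta>) * b ^ (length \<beta> - length \<alpha>))"
        by (simp add: sum.inter_filter)
      also have "\<dots> = Bhat (-a) (a + b) (rev \<alpha>) \<gamma>"
      proof (cases "compset \<alpha> \<subseteq> compset \<delta>")
        case True
        have ld: "length \<delta> = length \<gamma>" by (simp add: \<delta>_def)
        have "compset (rev \<alpha>) \<subseteq> compset \<gamma>"
          using rev_iff[of \<alpha> \<gamma>] True sg n_def \<delta>_def by simp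
        then have r: "Bhat (-a) (a + b) (rev \<alpha>) \<gamma> = (-a) ^ (n - length \<gamma>) * (a + b) ^ (length \<gamma> - length \<alpha>)"
          using rhs gcn by simp
        show ?thesis unfolding core[OF ac dc True] r ld
          by (simp add: power_mult_distrib[symmetric])
      next
        case False
        have e: "{\<beta>\<in>comps n. compset \<alpha> \<subseteq> compset \<beta> \<and> compset \<beta> \<subseteq> compset \<delta>} = {}"
          using False by blast
        have "\<not> compset (rev \<alpha>) \<subseteq> compset \<gamma>"
          using rev_iff[of \<alpha> \<gamma>] False sg n_def \<delta>_def by simp
        then show ?thesis unfolding e using rhs by simp
      qed
      finally show ?thesis .
    qed
  qed
qed

end
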